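(* Let $n\ge 1$. It is possible to place $n$ queens on an $n\times n$ symmetric Toeplitz chessboard so that no two queens attack each other if and only if $n \equiv 0$ or $1 \pmod 4$.
   Context: An $n\times n$ symmetric Toeplitz chessboard is one whose square $(i,j)$ ($1\le i,j\le n$) is labeled by a number depending only on $|i-j|$, with distinct values of $|i-j|$ receiving distinct labels (equivalently, square $(i,j)$ is labeled $|i-j|$). Two queens attack each other if they lie in the same row, in the same column, or on squares with the same label. *)

theory Defs
  imports Main
begin

definition toeplitz_label :: "nat \<Rightarrow> nat \<Rightarrow> nat" where
  "toeplitz_label i j = (if i \<le> j then j - i else i - j)"

definition board :: "nat \<Rightarrow> (nat \<times> nat) set" where
  "board n = {1..n} \<times> {1..n}"

definition attacks :: "nat \<times> nat \<Rightarrow> nat \<times> nat \<Rightarrow> bool" where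
  "attacks p q \<longleftrightarrow> fst p = fst q \<or> snd p = snd q
      \<or> toeplitz_label (fst p) (snd p) = toeplitz_label (fst q) (snd q)"

definition nonattacking_queens :: "nat \<Rightarrow> (nat \<times> nat) set \<Rightarrow> bool" where
  "nonattacking_queens n Q \<longleftrightarrow> Q \<subseteq> board n \<and> card Q = n \<and>
      (\<forall>p\<in>Q. \<forall>q\<in>Q. p \<noteq> q \<longrightarrow> \<not> attacks p q)"

end

theory Submission
  imports Defs
begin

lemma suff_gen:
  assumes "\<And>i. i \<in> {1..n} \<Longrightarrow> \<sigma> i \<in> {1..n}"
    and inj1: "\<And>i j. i \<in> {1..n} \<Longrightarrow> j \<in> {1..n} \<Longrightarrow> \<sigma> i = \<sigma> j \<Longrightarrow> i = j"
    and inj2: "\<And>i j. i \<in> {1..n} \<Longrightarrow> j \<in> {1..n} \<Longrightarrow>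
           toeplitz_label i (\<sigma> i) = toeplitz_label j (\<sigma> j) \<Longrightarrow> i = j"
  shows "\<exists>Q. nonattacking_queens n Q"
proof -
  let ?Q = "(\<lambda>i. (i, \<sigma> i)) ` {1..n}"
  have "?Q \<subseteq> board n" using assms(1) by (auto simp: board_def)
  moreover have "card ?Q = n"
    by (subst card_image) (auto simp: inj_on_def)
  moreover have "\<forall>p\<in>?Q. \<forall>q\<in>?Q. p \<noteq> q \<longrightarrow> \<not> attacks p q"
  proof (intro ballI impI)
    fix p q assume p: "p \<in> ?Q" and q: "q \<in> ?Q" and pq: "p \<noteq> q"
    from p obtain i where i: "i \<in> {1..n}" "p = (i, \<sigma> i)" by blast
    from q obtain j where j: "j \<in> {1..n}" "q = (j, \<sigma> j)" by blast
    have ij: "i \<noteq> j" using pq i j by blast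
    have "\<sigma> i \<noteq> \<sigma> j" using inj1[OF i(1) j(1)] ij by blast
    moreover have "toeplitz_label i (\<sigma> i) \<noteq> toeplitz_label j (\<sigma> j)" using inj2[OF i(1) j(1)] ij by blast
    ultimately show "\<not> attacks p q" unfolding attacks_def using i(2) j(2) ij by simp
  qed
  ultimately show ?thesis unfolding nonattacking_queens_def by blast
qed

definition sig4 :: "nat \<Rightarrow> nat \<Rightarrow> nat" where
  "sig4 m i = (if i \<le> m then 4*m+1-i else if i \<le> 2*m-1 then 4*m-i
     else if i \<le> 3*m-1 then 4*m-1-i else if i = 3*m then 3*m
     else if i \<le> 4*m-1 then 4*m-i else 2*m)"

definition sig5 :: "nat \<Rightarrow> nat \<Rightarrow> nat" where
  "sig5 m i = (if i \<le> m then 4*m+2-i else if i \<le> 2*m then 4*m+1-i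
     else if i \<le> 3*m then 4*m-i else if i = 3*m+1 then 3*m+1
     else if i \<le> 4*m then 4*m+1-i else 2*m)"

definition inv4 :: "nat \<Rightarrow> nat \<Rightarrow> nat" where
  "inv4 m d = (if d = 0 then 3*m else if odd d then (if d \<ge> 2*m+1 then (4*m+1-d) div 2 else (d+4*m-1) div 2)
     else if d \<le> 2*m-2 then (4*m-d) div 2 else if d = 2*m then 4*m else (d+4*m) div 2)"



definition inv5 :: "nat \<Rightarrow> nat \<Rightarrow> nat" where
  "inv5 m d = (if d = 0 then 3*m+1 else if even d then (if d \<ge> 2*m+2 then (4*m+2-d) div 2 else (d+4*m) div 2)
     else if d \<le> 2*m-1 then (4*m+1-d) div 2 else if d = 2*m+1 then 4*m+1 else (d+4*m+1) div 2)"

lemma inv4_lab: assumes "m \<ge> 1" "i \<in> {1..4*m}" shows "inv4 m (toeplitz_label i (sig4 m i)) = i"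
proof -
  consider "i \<le> m" | "m < i" "i \<le> 2*m-1" | "2*m-1 < i" "i \<le> 3*m-1" | "i = 3*m"
    | "3*m < i" "i \<le> 4*m-1" | "i = 4*m" using assms by (simp, linarith)
  then show ?thesis
  proof cases
    case 1
    then have s: "sig4 m i = 4*m+1-i" by (simp add: sig4_def)
    have d: "toeplitz_label i (sig4 m i) = 2*(2*m-i)+1" unfolding s toeplitz_label_def using 1 assms by (simp; arith?)
    have "2*(2*m-i)+1 \<ge> 2*m+1" "4*m+1-(2*(2*m-i)+1) = 2*i" using 1 by simp_all
    then show ?thesis unfolding d inv4_def by simp
  next
    case 2
    then have s: "sig4 m i = 4*m-i" by (simp add: sig4_def)
    have d: "toeplitz_label i (sig4 m i) = 2*(2*m-i)" unfolding s toeplitz_label_def using 2 assms by (simp; arith?)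
    have "2*(2*m-i) \<noteq> 0" "2*(2*m-i) \<le> 2*m-2" "4*m-(2*(2*m-i)) = 2*i" using 2 by simp_all
    then show ?thesis unfolding d inv4_def by simp
  next
    case 3
    then have s: "sig4 m i = 4*m-1-i" by (simp add: sig4_def)
    have d: "toeplitz_label i (sig4 m i) = 2*(i-2*m)+1" unfolding s toeplitz_label_def using 3 assms by (simp; arith?)
    have "\<not> 2*(i-2*m)+1 \<ge> 2*m+1" "2*(i-2*m)+1+4*m-1 = 2*i" using 3 by simp_all
    then show ?thesis unfolding d inv4_def by simp
  next
    case 4
    then have s: "sig4 m i = i" using assms by (simp add: sig4_def; arith?)
    show ?thesis unfolding s toeplitz_label_def inv4_def using 4 by simp
  next
    case 5
    then have s: "sig4 m i = 4*m-i" by (simp add: sig4_def)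
    have d: "toeplitz_label i (sig4 m i) = 2*(i-2*m)" unfolding s toeplitz_label_def using 5 assms by (simp; arith?)
    have "2*(i-2*m) \<noteq> 0" "\<not> 2*(i-2*m) \<le> 2*m-2" "2*(i-2*m) \<noteq> 2*m" "2*(i-2*m)+4*m = 2*i" using 5 by simp_all
    then show ?thesis unfolding d inv4_def by simp
  next
    case 6
    then have s: "sig4 m i = 2*m" using assms by (simp add: sig4_def; arith?)
    have d: "toeplitz_label i (sig4 m i) = 2*m" unfolding s toeplitz_label_def using 6 by simp
    have "2*m \<noteq> 0" "\<not> 2*m \<le> 2*m-2" using assms(1) by linarith+
    then show ?thesis unfolding d inv4_def using 6 by simp
  qed
qed


lemma inv5_lab: assumes "m \<ge> 1" "i \<in> {1..4*m+1}" shows "inv5 m (toeplitz_label i (sig5 m i)) = i"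
proof -
  consider "i \<le> m" | "m < i" "i \<le> 2*m" | "2*m < i" "i \<le> 3*m" | "i = 3*m+1"
    | "3*m+1 < i" "i \<le> 4*m" | "i = 4*m+1" using assms by (simp, linarith)
  then show ?thesis
  proof cases
    case 1
    then have s: "sig5 m i = 4*m+2-i" by (simp add: sig5_def)
    have d: "toeplitz_label i (sig5 m i) = 2*(2*m+1-i)" unfolding s toeplitz_label_def using 1 assms by (simp; arith?)
    have "2*(2*m+1-i) \<noteq> 0" "2*(2*m+1-i) \<ge> 2*m+2" "4*m+2-(2*(2*m+1-i)) = 2*i" using 1 by simp_all
    then show ?thesis unfolding d inv5_def by simp
  next
    case 2
    then have s: "sig5 m i = 4*m+1-i" by (simp add: sig5_def)
    have d: "toeplitz_label i (sig5 m i) = 2*(2*m-i)+1" unfolding s toeplitz_label_def using 2 assms by (simp; arith?)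
    have "2*(2*m-i)+1 \<le> 2*m-1" "4*m+1-(2*(2*m-i)+1) = 2*i" using 2 by simp_all
    then show ?thesis unfolding d inv5_def by simp
  next
    case 3
    then have s: "sig5 m i = 4*m-i" by (simp add: sig5_def)
    have d: "toeplitz_label i (sig5 m i) = 2*(i-2*m)" unfolding s toeplitz_label_def using 3 assms by (simp; arith?)
    have "2*(i-2*m) \<noteq> 0" "\<not> 2*(i-2*m) \<ge> 2*m+2" "2*(i-2*m)+4*m = 2*i" using 3 by simp_all
    then show ?thesis unfolding d inv5_def by simp
  next
    case 4
    then have s: "sig5 m i = i" using assms by (simp add: sig5_def)
    show ?thesis unfolding s toeplitz_label_def inv5_def using 4 by simp
  next
    case 5
    then have s: "sig5 m i = 4*m+1-i" by (simp add: sig5_def)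
    have d: "toeplitz_label i (sig5 m i) = 2*(i-2*m-1)+1" unfolding s toeplitz_label_def using 5 assms by (simp; arith?)
    have "\<not> 2*(i-2*m-1)+1 \<le> 2*m-1" "2*(i-2*m-1)+1 \<noteq> 2*m+1" "2*(i-2*m-1)+1+4*m+1 = 2*i" using 5 by simp_all
    then show ?thesis unfolding d inv5_def by simp
  next
    case 6
    then have s: "sig5 m i = 2*m" using assms by (simp add: sig5_def; arith?)
    have d: "toeplitz_label i (sig5 m i) = 2*m+1" unfolding s toeplitz_label_def using 6 by simp
    show ?thesis unfolding d inv5_def using 6 by simp
  qed
qed

lemma exists4: assumes "m \<ge> 1" shows "\<exists>Q. nonattacking_queens (4*m) Q"
proof (rule suff_gen[where \<sigma>="sig4 m"])
  show "\<And>i. i \<in> {1..4*m} \<Longrightarrow> sig4 m i \<in> {1..4*m}"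
    using assms unfolding sig4_def by (simp split: if_split_asm; arith)
  show "\<And>i j. i \<in> {1..4*m} \<Longrightarrow> j \<in> {1..4*m} \<Longrightarrow> sig4 m i = sig4 m j \<Longrightarrow> i = j"
    using assms unfolding sig4_def by (simp split: if_split_asm; arith)
  show "\<And>i j. i \<in> {1..4*m} \<Longrightarrow> j \<in> {1..4*m} \<Longrightarrow>
     toeplitz_label i (sig4 m i) = toeplitz_label j (sig4 m j) \<Longrightarrow> i = j"
    by (metis assms inv4_lab)
qed

lemma exists5: assumes "m \<ge> 1" shows "\<exists>Q. nonattacking_queens (4*m+1) Q"
proof (rule suff_gen[where \<sigma>="sig5 m"])
  show "\<And>i. i \<in> {1..4*m+1} \<Longrightarrow> sig5 m i \<in> {1..4*m+1}"
    using assms unfolding sig5_def by (simp split: if_split_asm; arith)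
  show "\<And>i j. i \<in> {1..4*m+1} \<Longrightarrow> j \<in> {1..4*m+1} \<Longrightarrow> sig5 m i = sig5 m j \<Longrightarrow> i = j"
    using assms unfolding sig5_def by (simp split: if_split_asm; arith)
  show "\<And>i j. i \<in> {1..4*m+1} \<Longrightarrow> j \<in> {1..4*m+1} \<Longrightarrow>
     toeplitz_label i (sig5 m i) = toeplitz_label j (sig5 m j) \<Longrightarrow> i = j"
    by (metis assms inv5_lab)
qed

lemma exists1: "\<exists>Q. nonattacking_queens 1 Q"
  by (rule suff_gen[where \<sigma>="\<lambda>i. i"]) auto

lemma sum_parity: "(\<Sum>k<n. k) mod 2 = (if n mod 4 = 0 \<or> n mod 4 = 1 then 0 else (1::nat))"
proof (induction n)
  case 0 then show ?case by simp
next
  case (Suc n)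
  have "(\<Sum>k<Suc n. k) = (\<Sum>k<n. k) + n" by simp
  with Suc show ?case by presburger
qed

lemma necessary:
  assumes "nonattacking_queens n Q"
  shows "n mod 4 = 0 \<or> n mod 4 = 1"
proof -
  have sub: "Q \<subseteq> board n" and cQ: "card Q = n"
    and na: "\<And>p q. p \<in> Q \<Longrightarrow> q \<in> Q \<Longrightarrow> p \<noteq> q \<Longrightarrow> \<not> attacks p q"
    using assms unfolding nonattacking_queens_def by auto
  define lab where "lab p = toeplitz_label (fst p) (snd p)" for p
  have inj1: "inj_on fst Q" unfolding inj_on_def
  proof (intro ballI impI)
    fix p q assume "p \<in> Q" "q \<in> Q" "fst p = fst q"
    then show "p = q" using na[of p q] unfolding attacks_def by blast
  qed
  have inj2: "inj_on snd Q" unfolding inj_on_def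
  proof (intro ballI impI)
    fix p q assume "p \<in> Q" "q \<in> Q" "snd p = snd q"
    then show "p = q" using na[of p q] unfolding attacks_def by blast
  qed
  have inj3: "inj_on lab Q" unfolding inj_on_def
  proof (intro ballI impI)
    fix p q assume "p \<in> Q" "q \<in> Q" "lab p = lab q"
    then show "p = q" using na[of p q] unfolding attacks_def lab_def by blast
  qed
  have im1: "fst ` Q = {1..n}"
  proof (rule card_subset_eq)
    show "fst ` Q \<subseteq> {1..n}" using sub by (auto simp: board_def)
    show "card (fst ` Q) = card {1..n}" using card_image[OF inj1] cQ by simp
  qed simp
  have im2: "snd ` Q = {1..n}"
  proof (rule card_subset_eq)
    show "snd ` Q \<subseteq> {1..n}" using sub by (auto simp: board_def)
    show "card (snd ` Q) = card {1..n}" using card_image[OF inj2] cQ by simp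
  qed simp
  have im3: "lab ` Q = {..<n}"
  proof (rule card_subset_eq)
    show "lab ` Q \<subseteq> {..<n}"
    proof
      fix x assume "x \<in> lab ` Q"
      then obtain p where p: "p \<in> Q" "x = lab p" by blast
      then have "fst p \<in> {1..n}" "snd p \<in> {1..n}" using sub by (auto simp: board_def)
      then show "x \<in> {..<n}" using p(2) by (auto simp: lab_def toeplitz_label_def)
    qed
    show "card (lab ` Q) = card {..<n}" using card_image[OF inj3] cQ by simp
  qed simp
  have s1: "(\<Sum>p\<in>Q. fst p) = (\<Sum>i\<in>{1..n}. i)"
    using sum.reindex[OF inj1, of "\<lambda>x. x"] im1 by simp
  have s2: "(\<Sum>p\<in>Q. snd p) = (\<Sum>i\<in>{1..n}. i)"
    using sum.reindex[OF inj2, of "\<lambda>x. x"] im2 by simp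
  have s3: "(\<Sum>p\<in>Q. lab p) = (\<Sum>k<n. k)"
    using sum.reindex[OF inj3, of "\<lambda>x. x"] im3 by simp
  have e: "\<And>p. lab p + fst p + snd p = 2 * max (fst p) (snd p)"
    by (auto simp: lab_def toeplitz_label_def max_def)
  have "(\<Sum>p\<in>Q. lab p) + (\<Sum>p\<in>Q. fst p) + (\<Sum>p\<in>Q. snd p) = (\<Sum>p\<in>Q. lab p + fst p + snd p)"
    by (simp add: sum.distrib)
  also have "\<dots> = 2 * (\<Sum>p\<in>Q. max (fst p) (snd p))"
    by (simp add: e sum_distrib_left)
  finally have "(\<Sum>k<n. k) + 2 * (\<Sum>i\<in>{1..n}. i) = 2 * (\<Sum>p\<in>Q. max (fst p) (snd p))"
    using s1 s2 s3 by simp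
  hence "even (\<Sum>k<n. k)" by presburger
  thus ?thesis using sum_parity[of n] by (auto split: if_splits)
qed

theorem corollary2:
  fixes n :: nat
  assumes "n \<ge> 1"
  shows "(\<exists>Q. nonattacking_queens n Q) \<longleftrightarrow> (n mod 4 = 0 \<or> n mod 4 = 1)"
proof
  assume "\<exists>Q. nonattacking_queens n Q"
  then show "n mod 4 = 0 \<or> n mod 4 = 1" using necessary by blast
next
  assume h: "n mod 4 = 0 \<or> n mod 4 = 1"
  define m where "m = n div 4"
  show "\<exists>Q. nonattacking_queens n Q"
  proof (cases "m = 0")
    case True
    then have "n = 1" using h m_def assms by auto
    then show ?thesis using exists1 by simp
  next
    case False
    then have m1: "m \<ge> 1" by simp
    from h show ?thesis
    proof
      assume "n mod 4 = 0"
      then have "n = 4*m" using m_def by presburger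
      then show ?thesis using exists4[OF m1] by simp
    next
      assume "n mod 4 = 1"
      then have "n = 4*m+1" using m_def by presburger
      then show ?thesis using exists5[OF m1] by simp
    qed
  qed
qed

end
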